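(* Let $X$ be a topological space, $Y$ a $T_1$ topological space, $\pi: X \to Y$ a continuous surjection, and $y \in Y$. Let $Y^y$ be the quotient space of $X$ obtained by identifying each fiber $\pi^{-1}(y')$ with $y' \neq y$ to a single point while leaving every point of $\pi^{-1}(y)$ as its own class, let $p^y: X \to Y^y$ be the quotient map, and let $\pi^y: Y^y \to Y$ be the unique map with $\pi = \pi^y \circ p^y$. Then the restriction $p^y|_{\pi^{-1}(y)}: \pi^{-1}(y) \to (\pi^y)^{-1}(y)$ is a homeomorphism (with the subspace topologies from $X$ and $Y^y$ respectively). *)

theory Defs
  imports "HOL-Analysis.Analysis"
begin

lemma istopology_quotient:
  "istopology (\<lambda>U. U \<subseteq> p ` topspace X \<and> openin X {x \<in> topspace X. p x \<in> U})"
proof -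
  have 1: "openin X {x \<in> topspace X. p x \<in> S \<inter> T}"
    if "openin X {x \<in> topspace X. p x \<in> S}" "openin X {x \<in> topspace X. p x \<in> T}" for S T
  proof -
    have "{x \<in> topspace X. p x \<in> S \<inter> T} =
          {x \<in> topspace X. p x \<in> S} \<inter> {x \<in> topspace X. p x \<in> T}" by auto
    then show ?thesis using that by auto
  qed
  have 2: "openin X {x \<in> topspace X. p x \<in> \<Union>K}"
    if "\<forall>U\<in>K. openin X {x \<in> topspace X. p x \<in> U}" for K
  proof -
    have "{x \<in> topspace X. p x \<in> \<Union>K} = (\<Union>U\<in>K. {x \<in> topspace X. p x \<in> U})" by auto
    then show ?thesis using that by auto
  qed
  show ?thesis unfolding istopology_def using 1 2 by blast
qed

definition quotient_topology :: "'a topology \<Rightarrow> ('a \<Rightarrow> 'b) \<Rightarrow> 'b topology" where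
  "quotient_topology X p =
     topology (\<lambda>U. U \<subseteq> p ` topspace X \<and> openin X {x \<in> topspace X. p x \<in> U})"

definition fiber_collapse :: "'a topology \<Rightarrow> ('a \<Rightarrow> 'b) \<Rightarrow> 'b \<Rightarrow> 'a \<Rightarrow> 'a set" where
  "fiber_collapse X \<pi> y x =
     (if \<pi> x = y then {x} else {x' \<in> topspace X. \<pi> x' = \<pi> x})"

end

theory Submission
  imports Defs
begin

theorem proposition4p1:
  fixes X :: "'a topology" and Y :: "'b topology" and \<pi> :: "'a \<Rightarrow> 'b" and y :: 'b
    and \<pi>y :: "'a set \<Rightarrow> 'b"
  assumes "t1_space Y"
    and "continuous_map X Y \<pi>"
    and "\<pi> ` topspace X = topspace Y"
    and "y \<in> topspace Y"
    and "\<forall>x \<in> topspace X. \<pi>y (fiber_collapse X \<pi> y x) = \<pi> x"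
  shows "homeomorphic_map
           (subtopology X {x \<in> topspace X. \<pi> x = y})
           (subtopology (quotient_topology X (fiber_collapse X \<pi> y))
              {c \<in> topspace (quotient_topology X (fiber_collapse X \<pi> y)). \<pi>y c = y})
           (fiber_collapse X \<pi> y)"
proof -
  define p where "p = fiber_collapse X \<pi> y"
  define Q where "Q = quotient_topology X p"
  define F where "F = {x \<in> topspace X. \<pi> x = y}"
  have openQ: "openin Q U \<longleftrightarrow> U \<subseteq> p ` topspace X \<and> openin X {x \<in> topspace X. p x \<in> U}" for U
    unfolding Q_def quotient_topology_def using istopology_quotient[of p X] by simp
  have topQ: "topspace Q = p ` topspace X"
  proof
    show "topspace Q \<subseteq> p ` topspace X" using openQ[of "topspace Q"] by simp
    have "{x \<in> topspace X. p x \<in> p ` topspace X} = topspace X" by auto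
    then have "openin Q (p ` topspace X)" unfolding openQ by simp
    then show "p ` topspace X \<subseteq> topspace Q" by (rule openin_subset)
  qed
  have contQ: "continuous_map X Q p"
    unfolding continuous_map_def using topQ openQ by auto
  have pF: "f \<in> F \<Longrightarrow> p f = {f}" for f unfolding p_def F_def fiber_collapse_def by auto
  have key: "w \<in> topspace X \<Longrightarrow> f \<in> F \<Longrightarrow> p w = p f \<Longrightarrow> w = f" for w f
  proof -
    assume w: "w \<in> topspace X" and f: "f \<in> F" and e: "p w = p f"
    have "w \<in> p w" using w unfolding p_def fiber_collapse_def by auto
    then show "w = f" using e pF[OF f] by auto
  qed
  have T: "{c \<in> topspace Q. \<pi>y c = y} = p ` F"
  proof -
    have A: "\<forall>x\<in>topspace X. \<pi>y (p x) = \<pi> x" using assms(5) p_def by simp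
    show ?thesis
    proof
      show "{c \<in> topspace Q. \<pi>y c = y} \<subseteq> p ` F"
      proof
        fix c assume c: "c \<in> {c \<in> topspace Q. \<pi>y c = y}"
        then obtain x where x: "x \<in> topspace X" "c = p x" using topQ by auto
        have "\<pi>y c = y" using c by simp
        then have "\<pi> x = y" using A x by metis
        then show "c \<in> p ` F" using x unfolding F_def by auto
      qed
      show "p ` F \<subseteq> {c \<in> topspace Q. \<pi>y c = y}"
      proof
        fix c assume "c \<in> p ` F"
        then obtain x where x: "x \<in> topspace X" "\<pi> x = y" "c = p x" unfolding F_def by auto
        then have "\<pi>y c = y" using A by metis
        moreover have "c \<in> topspace Q" using x topQ by simp
        ultimately show "c \<in> {c \<in> topspace Q. \<pi>y c = y}" by simp
      qed
    qed
  qed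
  have closedF: "closedin X F"
  proof -
    have "closedin Y {y}" using assms(1,4) unfolding t1_space_closedin_singleton by blast
    then have "closedin X {x \<in> topspace X. \<pi> x \<in> {y}}"
      by (rule closedin_continuous_map_preimage[OF assms(2)])
    then show ?thesis unfolding F_def by simp
  qed
  have FX: "F \<subseteq> topspace X" unfolding F_def by auto
  have "homeomorphic_map (subtopology X F) (subtopology Q (p ` F)) p"
  proof (rule bijective_open_imp_homeomorphic_map)
    show "continuous_map (subtopology X F) (subtopology Q (p ` F)) p"
      by (intro continuous_map_into_subtopology continuous_map_from_subtopology contQ)
         (simp add: image_mono)
    show "p ` topspace (subtopology X F) = topspace (subtopology Q (p ` F))"
      using FX topQ by auto
    show "inj_on p (topspace (subtopology X F))"
      using FX pF by (auto simp: inj_on_def)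
    show "open_map (subtopology X F) (subtopology Q (p ` F)) p"
      unfolding open_map_def
    proof (intro allI impI)
      fix U assume "openin (subtopology X F) U"
      then obtain V where V: "openin X V" and U: "U = V \<inter> F"
        by (auto simp: openin_subtopology)
      define W where "W = V \<union> (topspace X - F)"
      have Wo: "openin X W" unfolding W_def using V closedF by auto
      have WX: "W \<subseteq> topspace X" using Wo openin_subset by auto
      have pre: "{x \<in> topspace X. p x \<in> p ` W} = W"
      proof
        show "W \<subseteq> {x \<in> topspace X. p x \<in> p ` W}" using WX by auto
        show "{x \<in> topspace X. p x \<in> p ` W} \<subseteq> W"
        proof
          fix x assume x: "x \<in> {x \<in> topspace X. p x \<in> p ` W}"
          then obtain w where w: "w \<in> W" "p x = p w" by auto
          show "x \<in> W"
          proof (cases "x \<in> F")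
            case True
            then show ?thesis using key[of w x] w WX by auto
          next
            case False then show ?thesis using x unfolding W_def by auto
          qed
        qed
      qed
      have "openin Q (p ` W)" unfolding openQ using pre Wo WX by auto
      moreover have "p ` U = p ` W \<inter> p ` F"
      proof
        show "p ` U \<subseteq> p ` W \<inter> p ` F" unfolding U W_def by auto
        show "p ` W \<inter> p ` F \<subseteq> p ` U"
        proof
          fix c assume "c \<in> p ` W \<inter> p ` F"
          then obtain w f where "w \<in> W" "f \<in> F" "c = p w" "p w = p f" by auto
          then have "w = f" using key[of w f] WX by blast
          then show "c \<in> p ` U" using \<open>w \<in> W\<close> \<open>f \<in> F\<close> \<open>c = p w\<close> unfolding U W_def by auto
        qed
      qed
      ultimately show "openin (subtopology Q (p ` F)) (p ` U)"
        unfolding openin_subtopology by blast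
    qed
  qed
  then have "homeomorphic_map (subtopology X F) (subtopology Q {c \<in> topspace Q. \<pi>y c = y}) p"
    by (simp only: T)
  then show ?thesis unfolding p_def Q_def F_def .
qed

end
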